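(* Let $(M,L)$ be a circle pair with $m=2$, $L=S_1\sqcup S_2$, as in the context. Let $N$ be a subset with $L\subset N\subset M$, let $i_1:S_1\to N$, $i_2:S_2\to N$ be the inclusions, and assume $(i_1)_*:\pi_1(S_1,p_1)\to\pi_1(N,p_1)$ is injective. Let $f:(S_1,p_1)\to(S_2,p_2)$ be a continuous map of degree $\ell$, let $H:S_1\times[0,1]\to N$ be a continuous homotopy from $i_1$ to $i_2\circ f$, and let $\alpha:=H(p_1,\cdot)$. If $F\in{\rm Isot}^r(M,L)_{\mathrm{id},\mathrm{id}}$ satisfies $F_t(\alpha(s))\in N$ for all $s,t\in[0,1]$, then $\nu_2(F)=\ell\,\nu_1(F)$.
   Context: Circle pair: $M$ a $C^r$ $n$-manifold ($n\ge2$, $r\in\{0,1,\dots\}\cup\{\infty\}$), $S_1,S_2$ disjoint $C^r$ circles in $\mathrm{Int}M$, each identified with $\mathbb R/\mathbb Z$ (fixing orientations for degrees) and with base point $p_i$. A $C^r$ isotopy of $(M,L)$ is $F=(F_t)_{t\in[0,1]}$ with $(x,t)\mapsto(F_t(x),t)$ a $C^r$ diffeomorphism of $M\times[0,1]$ and $F_t(L)=L$; ${\rm Isot}^r(M,L)_{\mathrm{id},\mathrm{id}}$: those with $F_0=F_1=\mathrm{id}$. $\nu_i(F)=\lambda(t\mapsto F_t(p_i))$ with $\lambda(\gamma)=\tilde\gamma(1)-\tilde\gamma(0)$ for a lift $\tilde\gamma$ (for a loop this is its degree). *)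

theory Defs
  imports "HOL-Analysis.Analysis"
begin

text \<open>Topological n-manifold (possibly with boundary), realised as a subset M of a
  Hausdorff type with the subspace topology; n = CARD('n).  Charts go to relatively
  open subsets of a closed half-space of real^'n (which includes open subsets of real^'n).\<close>
definition top_manifold :: "'a::t2_space set \<Rightarrow> 'n::finite itself \<Rightarrow> bool" where
  "top_manifold M _ \<longleftrightarrow>
     second_countable (top_of_set M) \<and>
     (\<forall>p\<in>M. \<exists>U (V::(real^'n) set) k.
        openin (top_of_set M) U \<and> p \<in> U \<and>
        openin (top_of_set {x. 0 \<le> x $ k}) V \<and> U homeomorphic V)"

definition manifold_interior :: "'a::t2_space set \<Rightarrow> 'n::finite itself \<Rightarrow> 'a set" where
  "manifold_interior M _ =
     {p\<in>M. \<exists>U (V::(real^'n) set). openin (top_of_set M) U \<and> p \<in> U \<and> open V \<and> U homeomorphic V}"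

text \<open>A circle S in M identified with R/Z via a continuous, 1-periodic map c that is
  injective on [0,1) with image S (an embedding of R/Z, since M is Hausdorff).\<close>
definition circle_param :: "(real \<Rightarrow> 'a::t2_space) \<Rightarrow> 'a set \<Rightarrow> bool" where
  "circle_param c S \<longleftrightarrow> continuous_on UNIV c \<and> (\<forall>s. c (s + 1) = c s) \<and>
     inj_on c {0..<1} \<and> c ` {0..<1} = S"

text \<open>lambda(gamma) = lift(1) - lift(0) for a path gamma in the circle parametrised by c
  (independent of the choice of lift).\<close>
definition circ_lambda :: "(real \<Rightarrow> 'a) \<Rightarrow> (real \<Rightarrow> 'a) \<Rightarrow> real" where
  "circ_lambda c \<gamma> = (SOME d. \<exists>g. continuous_on {0..1} g \<and>
       (\<forall>t\<in>{0..1}. c (g t) = \<gamma> t) \<and> d = g 1 - g 0)"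

text \<open>Isotopy of (M,L) (C^0 case): (x,t) |-> (F_t x, t) is a homeomorphism of M x [0,1],
  F_t(L) = L, and F_0 = F_1 = id.\<close>
definition isot_id_id :: "'a::topological_space set \<Rightarrow> 'a set \<Rightarrow> (real \<Rightarrow> 'a \<Rightarrow> 'a) \<Rightarrow> bool" where
  "isot_id_id M L F \<longleftrightarrow>
     (\<exists>G. homeomorphism (M \<times> {0..1}) (M \<times> {0..1}) (\<lambda>(x,t). (F t x, t)) G) \<and>
     (\<forall>t\<in>{0..1}. F t ` L = L) \<and> (\<forall>x\<in>M. F 0 x = x \<and> F 1 x = x)"

end

theory Submission
  imports Defs
begin


definition ee :: "real \<Rightarrow> complex" where "ee t = exp (2 * pi * \<i> * complex_of_real t)"

lemma ee_eq_iff: "ee x = ee y \<longleftrightarrow> (\<exists>n::int. x = y + of_int n)"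
proof -
  have "ee x = ee y \<longleftrightarrow> (\<exists>n::int. 2 * pi * \<i> * complex_of_real x = 2 * pi * \<i> * complex_of_real y + (of_int (2 * n) * pi) * \<i>)"
    unfolding ee_def by (rule exp_eq)
  also have "\<dots> \<longleftrightarrow> (\<exists>n::int. x = y + of_int n)"
  proof -
    have "2 * pi * \<i> * complex_of_real x = 2 * pi * \<i> * complex_of_real y + (of_int (2 * n) * pi) * \<i>
          \<longleftrightarrow> x = y + of_int n" for n::int
    proof -
      have "2 * pi * \<i> * complex_of_real x = 2 * pi * \<i> * complex_of_real y + (of_int (2 * n) * pi) * \<i>
            \<longleftrightarrow> (2 * pi * \<i>) * complex_of_real x = (2 * pi * \<i>) * complex_of_real (y + of_int n)"
        by (simp add: algebra_simps)
      also have "\<dots> \<longleftrightarrow> x = y + of_int n"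
      proof -
        have nz: "2 * pi * \<i> \<noteq> (0::complex)" by simp
        show ?thesis by (subst mult_left_cancel[OF nz]) (rule of_real_eq_iff)
      qed
      finally show ?thesis .
    qed
    then show ?thesis by blast
  qed
  finally show ?thesis .
qed

lemma continuous_ee: "continuous_on A ee"
  unfolding ee_def by (intro continuous_intros)

lemma ee_frac: "ee (frac x) = ee x"
  unfolding ee_eq_iff frac_def by (intro exI[of _ "-\<lfloor>x\<rfloor>"]) simp

lemma ee_int: "ee (of_int n) = 1"
proof -
  have "ee (of_int n) = ee 0" unfolding ee_eq_iff by (intro exI[of _ n]) simp
  then show ?thesis by (simp add: ee_def)
qed

lemma int_valued_const:
  fixes f :: "'a::topological_space \<Rightarrow> real"
  assumes "connected S" "continuous_on S f" "\<And>x. x \<in> S \<Longrightarrow> f x \<in> \<int>" "x \<in> S" "y \<in> S"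
  shows "f x = f y"
proof -
  have "f constant_on S"
  proof (rule continuous_discrete_range_constant[OF assms(1,2)])
    fix x assume x: "x \<in> S"
    show "\<exists>e>0. \<forall>y. y \<in> S \<and> f y \<noteq> f x \<longrightarrow> e \<le> norm (f y - f x)"
    proof (intro exI[of _ 1] conjI allI impI)
      fix y assume "y \<in> S \<and> f y \<noteq> f x"
      then have "f y - f x \<in> \<int>" "f y - f x \<noteq> 0" using assms(3) x by auto
      then obtain k :: int where k: "f y - f x = of_int k" "k \<noteq> 0" by (metis Ints_cases of_int_0)
      then have "1 \<le> \<bar>k\<bar>" by simp
      then have "1 \<le> \<bar>real_of_int k\<bar>" by (metis of_int_1_le_iff of_int_abs)
      then show "1 \<le> norm (f y - f x)" using k(1) by simp
    qed simp
  qed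
  then show ?thesis using assms(4,5) by (auto simp: constant_on_def)
qed

context
  fixes c :: "real \<Rightarrow> 'a::t2_space" and S :: "'a set"
  assumes cp: "circle_param c S"
begin

lemma cp_cont: "continuous_on A c"
  using cp unfolding circle_param_def by (meson continuous_on_subset subset_UNIV)

lemma cp_int: "c (x + of_int n) = c x"
proof (induction n rule: int_induct[where k=0])
  case base then show ?case by simp
next
  case (step1 i) then show ?case using cp unfolding circle_param_def
    by (metis add.assoc of_int_add of_int_1)
next
  case (step2 i)
  have "c (x + of_int (i - 1)) = c (x + of_int (i - 1) + 1)"
    using cp unfolding circle_param_def by metis
  also have "\<dots> = c (x + of_int i)" by (simp add: algebra_simps)
  finally show ?case using step2 by simp
qed

lemma cp_frac: "c (frac x) = c x"
  using cp_int[of "frac x" "\<lfloor>x\<rfloor>"] by (simp add: frac_def)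

lemma cp_eq_iff: "c x = c y \<longleftrightarrow> (\<exists>n::int. x = y + of_int n)"
proof
  assume "c x = c y"
  then have "c (frac x) = c (frac y)" by (simp add: cp_frac)
  then have "frac x = frac y"
    using cp unfolding circle_param_def inj_on_def
    by (simp add: frac_lt_1)
  then show "\<exists>n::int. x = y + of_int n"
    by (intro exI[of _ "\<lfloor>x\<rfloor> - \<lfloor>y\<rfloor>"]) (simp add: frac_def)
qed (auto simp: cp_int)

lemma cp_eq_ee: "c x = c y \<longleftrightarrow> ee x = ee y"
  by (simp add: cp_eq_iff ee_eq_iff)

lemma cp_image: "c ` UNIV = S"
proof -
  have "c ` UNIV = c ` {0..<1}"
  proof
    show "c ` UNIV \<subseteq> c ` {0..<1}"
      using cp_frac by (auto simp: frac_lt_1) (metis atLeastLessThan_iff frac_ge_0 frac_lt_1 image_eqI)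
  qed auto
  then show ?thesis using cp unfolding circle_param_def by simp
qed

lemma cp_in [simp]: "c x \<in> S"
  using cp_image by auto

lemma cp_compact: "compact S"
proof -
  have "c ` {0..1} = S"
  proof
    show "S \<subseteq> c ` {0..1}" using cp unfolding circle_param_def by auto
  qed (use cp_image in auto)
  then show ?thesis by (metis compact_Icc compact_continuous_image cp_cont)
qed

end


lemma factor_cont:
  fixes q :: "'a::t2_space \<Rightarrow> 'b::t2_space" and h :: "'a \<Rightarrow> 'c::topological_space"
  assumes X: "compact X" and q: "continuous_on X q" and h: "continuous_on X h"
    and hq: "\<And>x. x \<in> X \<Longrightarrow> h' (q x) = h x"
  shows "continuous_on (q ` X) h'"
  unfolding continuous_on_open
proof (intro allI impI)
  fix T assume T: "openin (top_of_set (h' ` q ` X)) T"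
  have im: "h' ` q ` X = h ` X" using hq by (force simp: image_image)
  have "openin (top_of_set X) (X \<inter> h -` T)" using h T im by (simp add: continuous_on_open)
  moreover have "X \<inter> q -` (q ` X \<inter> h' -` T) = X \<inter> h -` T" using hq by (auto; metis hq)
  ultimately have "openin (top_of_set X) (X \<inter> q -` (q ` X \<inter> h' -` T))" by simp
  then show "openin (top_of_set (q ` X)) (q ` X \<inter> h' -` T)"
    using Abstract_Topology_2.continuous_imp_quotient_map[of X q "q ` X" "q ` X \<inter> h' -` T"] q X by auto
qed

definition phi :: "(real \<Rightarrow> 'a) \<Rightarrow> 'a \<Rightarrow> complex" where
  "phi c y = ee (SOME x. x \<in> {0..1} \<and> c x = y)"

context
  fixes c :: "real \<Rightarrow> 'a::t2_space" and S :: "'a set"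
  assumes cp: "circle_param c S"
begin

lemma cp_image01: "c ` {0..1} = S"
proof
  show "S \<subseteq> c ` {0..1}" using cp unfolding circle_param_def by auto
qed (use cp_image[OF cp] in auto)

lemma phi_c: "phi c (c x) = ee x"
proof -
  have ex: "\<exists>x'. x' \<in> {0..1} \<and> c x' = c x"
    by (intro exI[of _ "frac x"]) (simp add: cp_frac[OF cp] frac_lt_1 less_imp_le)
  have "(SOME x'. x' \<in> {0..1} \<and> c x' = c x) \<in> {0..1} \<and> c (SOME x'. x' \<in> {0..1} \<and> c x' = c x) = c x"
    by (rule someI_ex[OF ex])
  then show ?thesis unfolding phi_def using cp_eq_ee[OF cp] by blast
qed

lemma phi_cont: "continuous_on S (phi c)"
proof -
  have "continuous_on (c ` {0..1}) (phi c)"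
    by (rule factor_cont[where h=ee]) (auto simp: cp_cont[OF cp] continuous_ee phi_c)
  then show ?thesis by (simp add: cp_image01)
qed

lemma norm_ee: "norm (ee x) = 1"
  by (simp add: ee_def)

lemma cp_lift:
  fixes K :: "'b::real_normed_vector \<Rightarrow> 'a"
  assumes D: "convex D" and K: "continuous_on D K" "K ` D \<subseteq> S"
  obtains G where "continuous_on D G" "\<And>z. z \<in> D \<Longrightarrow> c (G z) = K z"
proof -
  have cont: "continuous_on D (phi c \<circ> K)"
    by (rule continuous_on_compose[OF K(1)]) (rule continuous_on_subset[OF phi_cont K(2)])
  have nz: "(phi c \<circ> K) z \<noteq> 0" if "z \<in> D" for z
  proof -
    have "K z \<in> range c" using K(2) that cp_image[OF cp] by auto
    then obtain x where "K z = c x" by blast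
    then show ?thesis by (simp add: phi_c ee_def)
  qed
  obtain L where L: "continuous_on D L" "\<And>x. x \<in> D \<Longrightarrow> (phi c \<circ> K) x = exp (L x)"
    using continuous_logarithm_on_contractible[OF cont convex_imp_contractible[OF D] nz] by blast
  define G where "G z = Im (L z) / (2 * pi)" for z
  have "continuous_on D G" unfolding G_def by (auto intro!: continuous_intros L(1))
  moreover have "c (G z) = K z" if z: "z \<in> D" for z
  proof -
    have "K z \<in> range c" using K(2) z cp_image[OF cp] by auto
    then obtain x where x: "K z = c x" by blast
    have e1: "exp (L z) = ee x" using L(2)[OF z] x by (simp add: phi_c)
    then have "exp (Re (L z)) = 1" using norm_ee[of x] by (metis norm_exp_eq_Re)
    then have re: "Re (L z) = 0" by simp
    have "L z = complex_of_real (Re (L z)) + \<i> * complex_of_real (Im (L z))" by (rule complex_eq)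
    also have "\<dots> = \<i> * complex_of_real (Im (L z))" using re by simp
    also have "Im (L z) = 2 * pi * G z" by (simp add: G_def)
    finally have "L z = 2 * pi * \<i> * complex_of_real (G z)" by (simp add: ac_simps)
    then have "ee x = ee (G z)" using e1 by (simp add: ee_def)
    then show ?thesis using x cp_eq_ee[OF cp] by simp
  qed
  ultimately show ?thesis using that by blast
qed

lemma cp_lift_diff:
  assumes D: "connected D" and g: "continuous_on D g1" "continuous_on D g2"
    and eq: "\<And>z. z \<in> D \<Longrightarrow> c (g1 z) = c (g2 z)" and zw: "z \<in> D" "w \<in> D"
  shows "g1 z - g2 z = g1 w - g2 w"
proof (rule int_valued_const[OF D _ _ zw, of "\<lambda>z. g1 z - g2 z"])
  show "continuous_on D (\<lambda>z. g1 z - g2 z)" by (intro continuous_intros g)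
  fix x assume "x \<in> D"
  then obtain n :: int where "g1 x = g2 x + of_int n" using eq cp_eq_iff[OF cp] by blast
  then show "g1 x - g2 x \<in> \<int>" by simp
qed

lemma cp_lambda:
  assumes g: "continuous_on {0..1} g" "\<And>t. t \<in> {0..1} \<Longrightarrow> c (g t) = \<gamma> t"
  shows "circ_lambda c \<gamma> = g 1 - g 0"
proof -
  define P where "P d \<longleftrightarrow> (\<exists>g. continuous_on {0..1} g \<and> (\<forall>t\<in>{0..1}. c (g t) = \<gamma> t) \<and> d = g 1 - g 0)" for d
  have "P (g 1 - g 0)" unfolding P_def using g by blast
  then have "P (circ_lambda c \<gamma>)" unfolding circ_lambda_def P_def[symmetric] by (rule someI)
  then obtain g' where g': "continuous_on {0..1} g'" "\<And>t. t \<in> {0..1} \<Longrightarrow> c (g' t) = \<gamma> t"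
      "circ_lambda c \<gamma> = g' 1 - g' 0" unfolding P_def by blast
  have "g' 1 - g 1 = g' 0 - g 0"
    by (rule cp_lift_diff[OF connected_Icc g'(1) g(1)]) (auto simp: g'(2) g(2))
  then show ?thesis using g'(3) by simp
qed

lemma cp_path_lift:
  assumes "path \<gamma>" "path_image \<gamma> \<subseteq> S"
  obtains g where "continuous_on {0..1} g" "\<And>t. t \<in> {0..1} \<Longrightarrow> c (g t) = \<gamma> t"
  using cp_lift[OF convex_real_interval(5) assms[unfolded path_def path_image_def]] by blast

lemma cp_lambda_homotopic:
  assumes "homotopic_paths S \<gamma> \<delta>"
  shows "circ_lambda c \<gamma> = circ_lambda c \<delta>"
proof -
  obtain h where h: "continuous_on ({0..1} \<times> {0..1}) h" "h \<in> ({0..1} \<times> {0..1}) \<rightarrow> S"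
    "\<forall>x \<in> {0..1}. h(0,x) = \<gamma> x" "\<forall>x \<in> {0..1}. h(1,x) = \<delta> x"
    "\<forall>t \<in> {0..1::real}. pathstart(h \<circ> Pair t) = pathstart \<gamma> \<and> pathfinish(h \<circ> Pair t) = pathfinish \<gamma>"
    using assms unfolding homotopic_paths by blast
  obtain G where G: "continuous_on ({0..1} \<times> {0..1}) G" "\<And>z. z \<in> {0..1} \<times> {0..1} \<Longrightarrow> c (G z) = h z"
    using cp_lift[OF convex_Times[OF convex_real_interval(5) convex_real_interval(5)] h(1)] h(2) by blast
  have contG: "continuous_on {0..1} (\<lambda>t. G (s, t))" if "s \<in> {0..1}" for s
    by (rule continuous_on_compose2[OF G(1)]) (use that in \<open>auto intro!: continuous_intros\<close>)
  have contG': "continuous_on {0..1} (\<lambda>s. G (s, t))" if "t \<in> {0..1}" for t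
    by (rule continuous_on_compose2[OF G(1)]) (use that in \<open>auto intro!: continuous_intros\<close>)
  have l0: "circ_lambda c \<gamma> = G (0, 1) - G (0, 0)"
    by (rule cp_lambda[OF contG]) (use G(2) h(3) in auto)
  have l1: "circ_lambda c \<delta> = G (1, 1) - G (1, 0)"
    by (rule cp_lambda[OF contG]) (use G(2) h(4) in auto)
  have a: "G (1, t) - G (0, t) = G (0, t) - G (0, t)" if t: "t \<in> {0..1}" "t = 0 \<or> t = 1" for t
  proof (rule cp_lift_diff[OF connected_Icc contG'[OF t(1)] continuous_on_const])
    fix s :: real assume s: "s \<in> {0..1}"
    show "c (G (s, t)) = c (G (0, t))"
      using G(2) h(5) s t by (auto simp: pathstart_def pathfinish_def)
  qed auto
  show ?thesis using a[of 0] a[of 1] l0 l1 by simp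
qed

lemma cp_homotopic_if_lambda:
  assumes p: "path \<gamma>" "path \<delta>" "path_image \<gamma> \<subseteq> S" "path_image \<delta> \<subseteq> S"
    and st: "pathstart \<gamma> = pathstart \<delta>" and l: "circ_lambda c \<gamma> = circ_lambda c \<delta>"
  shows "homotopic_paths S \<gamma> \<delta>"
proof -
  obtain g where g: "continuous_on {0..1} g" "\<And>t. t \<in> {0..1} \<Longrightarrow> c (g t) = \<gamma> t"
    using cp_path_lift[OF p(1,3)] by blast
  obtain h where h: "continuous_on {0..1} h" "\<And>t. t \<in> {0..1} \<Longrightarrow> c (h t) = \<delta> t"
    using cp_path_lift[OF p(2,4)] by blast
  have "c (h 0) = c (g 0)" using g(2)[of 0] h(2)[of 0] st by (simp add: pathstart_def)
  then obtain n :: int where n: "h 0 = g 0 + of_int n" using cp_eq_iff[OF cp] by blast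
  define h' where "h' t = h t + of_int (- n)" for t
  have h': "continuous_on {0..1} h'" "\<And>t. t \<in> {0..1} \<Longrightarrow> c (h' t) = \<delta> t"
  proof -
    show "continuous_on {0..1} h'" unfolding h'_def using h by (auto intro!: continuous_intros)
    fix t :: real assume t: "t \<in> {0..1}"
    have "c (h' t) = c (h t)" unfolding h'_def by (rule cp_int[OF cp])
    then show "c (h' t) = \<delta> t" using h(2)[OF t] by simp
  qed
  have "circ_lambda c \<gamma> = g 1 - g 0" by (rule cp_lambda[OF g])
  moreover have "circ_lambda c \<delta> = h' 1 - h' 0" by (rule cp_lambda[OF h'])
  ultimately have e1: "h' 1 = g 1" and e0: "h' 0 = g 0" using l n by (auto simp: h'_def)
  have "homotopic_paths UNIV g h'"
    by (rule homotopic_paths_linear) (use g(1) h'(1) e0 e1 in \<open>auto simp: path_def pathstart_def pathfinish_def\<close>)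
  then have hc: "homotopic_paths S (c \<circ> g) (c \<circ> h')"
    by (rule homotopic_paths_continuous_image) (auto simp: cp_cont[OF cp] cp_in[OF cp])
  have "homotopic_paths S \<gamma> (c \<circ> g)"
    by (rule homotopic_paths_eq[OF p(1,3)]) (simp add: g(2))
  moreover have "homotopic_paths S (c \<circ> h') \<delta>"
    using homotopic_paths_eq[OF p(2,4), of "c \<circ> h'"] h'(2) by (simp add: homotopic_paths_sym)
  ultimately show ?thesis using hc homotopic_paths_trans by blast
qed

end


lemma square_homotopy:
  fixes K :: "real \<times> real \<Rightarrow> 'a::topological_space"
  assumes K: "continuous_on ({0..1}\<times>{0..1}) K" "K ` ({0..1}\<times>{0..1}) \<subseteq> N"
   and u: "\<And>t. t\<in>{0..1} \<Longrightarrow> u t = K(0,t)" and v: "\<And>t. t \<in> {0..1} \<Longrightarrow> v t = K(1,t)"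
   and a: "\<And>s. s\<in>{0..1} \<Longrightarrow> a s = K(s,0)" and b: "\<And>s. s\<in>{0..1} \<Longrightarrow> b s = K(s,1)"
  shows "homotopic_paths N u (a +++ v +++ reversepath b)"
proof -
  define L where "L = (\<lambda>t::real. (0::real, t))"
  define B where "B = (\<lambda>s::real. (s, 0::real))"
  define R where "R = (\<lambda>t::real. (1::real, t))"
  define T where "T = (\<lambda>s::real. (s, 1::real))"
  define Sq :: "(real \<times> real) set" where "Sq = {0..1}\<times>{0..1}"
  have pL: "path L" and pB: "path B" and pR: "path R" and pT: "path T"
    unfolding L_def B_def R_def T_def path_def by (auto intro!: continuous_intros)
  have pJ: "path (B +++ R +++ reversepath T)"
    by (intro path_join_imp pB pR pT iffD2[OF path_reversepath]) (auto simp: B_def R_def T_def pathstart_def pathfinish_def reversepath_def joinpaths_def)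
  have inJ: "(B +++ R +++ reversepath T) t \<in> Sq" if "t \<in> {0..1}" for t
    using that by (auto simp: B_def R_def T_def Sq_def joinpaths_def reversepath_def)
  have "homotopic_paths Sq L (B +++ R +++ reversepath T)"
  proof (rule homotopic_paths_linear[OF pL pJ])
    show "pathstart (B +++ R +++ reversepath T) = pathstart L"
      by (simp add: B_def L_def pathstart_def joinpaths_def)
    show "pathfinish (B +++ R +++ reversepath T) = pathfinish L"
      by (simp add: T_def L_def pathfinish_def joinpaths_def reversepath_def)
    fix t :: real assume t: "t \<in> {0..1}"
    have "L t \<in> Sq" using t by (simp add: L_def Sq_def)
    moreover have "convex Sq" unfolding Sq_def by (intro convex_Times convex_real_interval)
    ultimately show "closed_segment (L t) ((B +++ R +++ reversepath T) t) \<subseteq> Sq"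
      using inJ[OF t] by (simp add: closed_segment_subset)
  qed
  then have h1: "homotopic_paths N (K \<circ> L) (K \<circ> (B +++ R +++ reversepath T))"
    by (rule homotopic_paths_continuous_image) (use K in \<open>auto simp: Sq_def\<close>)
  have e: "K \<circ> (B +++ R +++ reversepath T) = (K \<circ> B) +++ (K \<circ> R) +++ reversepath (K \<circ> T)"
    by (simp add: path_compose_join path_compose_reversepath)
  have h2: "homotopic_paths N u (K \<circ> L)"
  proof -
    have "homotopic_paths N (K \<circ> L) u"
      by (rule homotopic_paths_eq) (use h1 in \<open>auto dest: homotopic_paths_imp_path homotopic_paths_imp_subset simp: u L_def\<close>)
    then show ?thesis by (rule homotopic_paths_sym)
  qed
  have h3: "homotopic_paths N ((K \<circ> B) +++ (K \<circ> R) +++ reversepath (K \<circ> T)) (a +++ v +++ reversepath b)"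
  proof (rule homotopic_paths_eq)
    show "path ((K \<circ> B) +++ (K \<circ> R) +++ reversepath (K \<circ> T))"
      using h1 e by (metis homotopic_paths_imp_path)
    show "path_image ((K \<circ> B) +++ (K \<circ> R) +++ reversepath (K \<circ> T)) \<subseteq> N"
      using h1 e by (metis homotopic_paths_imp_subset)
    fix t :: real assume t: "t \<in> {0..1}"
    show "((K \<circ> B) +++ (K \<circ> R) +++ reversepath (K \<circ> T)) t = (a +++ v +++ reversepath b) t"
      using t by (auto simp: joinpaths_def reversepath_def B_def R_def T_def a v b)
  qed
  show ?thesis using h2 h1 h3 e homotopic_paths_trans by metis
qed

context
  fixes c :: "real \<Rightarrow> 'a::t2_space" and S :: "'a set"
  assumes cp: "circle_param c S"
begin

lemma cp_lambda_periodic: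
  assumes \<sigma>: "continuous_on UNIV \<sigma>" "range \<sigma> \<subseteq> S" "\<And>t. \<sigma> (t + 1) = \<sigma> t"
  shows "circ_lambda c (\<lambda>t. \<sigma> (a + of_int n * t)) = of_int n * circ_lambda c \<sigma>"
proof -
  obtain G where G0: "continuous_on UNIV G" "\<And>z. z \<in> UNIV \<Longrightarrow> c (G z) = \<sigma> z"
    by (metis cp_lift[OF cp convex_UNIV \<sigma>(1,2)])
  have G: "continuous_on UNIV G" "\<And>z. c (G z) = \<sigma> z" using G0 by auto
  define d where "d = G 1 - G 0"
  have step: "G (t + 1) = G t + d" for t
  proof -
    have "G (t + 1) - G t = G (0 + 1) - G 0"
    proof (rule cp_lift_diff[OF cp connected_UNIV _ G(1)])
      show "continuous_on UNIV (\<lambda>t. G (t + 1))"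
        by (rule continuous_on_compose2[OF G(1)]) (auto intro!: continuous_intros)
    qed (auto simp: G(2) \<sigma>(3))
    then show ?thesis by (simp add: d_def)
  qed
  have gi: "G (t + of_int m) = G t + of_int m * d" for t m
  proof (induction m rule: int_induct[where k=0])
    case base then show ?case by simp
  next
    case (step1 i)
    have "G (t + of_int (i + 1)) = G (t + of_int i + 1)" by (simp add: algebra_simps)
    also have "\<dots> = G (t + of_int i) + d" by (rule step)
    finally show ?case using step1 by (simp add: algebra_simps)
  next
    case (step2 i)
    have "G (t + of_int i) = G (t + of_int (i - 1) + 1)" by (simp add: algebra_simps)
    also have "\<dots> = G (t + of_int (i - 1)) + d" by (rule step)
    finally show ?case using step2 by (simp add: algebra_simps)
  qed
  have l1: "circ_lambda c \<sigma> = d"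
    unfolding d_def by (rule cp_lambda[OF cp]) (auto intro: continuous_on_subset[OF G(1)] simp: G(2))
  have "circ_lambda c (\<lambda>t. \<sigma> (a + of_int n * t)) = G (a + of_int n * 1) - G (a + of_int n * 0)"
  proof (rule cp_lambda[OF cp])
    show "continuous_on {0..1} (\<lambda>t. G (a + of_int n * t))"
      by (rule continuous_on_compose2[OF G(1)]) (auto intro!: continuous_intros)
  qed (simp add: G(2))
  also have "\<dots> = of_int n * d" using gi[of a n] by simp
  finally show ?thesis using l1 by simp
qed

end


lemma connected_stay:
  assumes "connected P" "P \<subseteq> A \<union> B" "closed A" "closed B" "A \<inter> B = {}" "x \<in> P" "x \<in> A"
  shows "P \<subseteq> A"
  using assms connected_closed[of P] by blast

lemma circ_lambda_cong:
  assumes "\<And>t. t \<in> {0..1} \<Longrightarrow> \<gamma> t = \<delta> t"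
  shows "circ_lambda c \<gamma> = circ_lambda c \<delta>"
proof -
  have "\<And>g. (\<forall>t\<in>{0..1}. c (g t) = \<gamma> t) = (\<forall>t\<in>{0..1}. c (g t) = \<delta> t)" using assms by auto
  then show ?thesis unfolding circ_lambda_def by simp
qed

lemma cp_lambda_loop_int:
  assumes cp: "circle_param c S" and "path \<gamma>" "path_image \<gamma> \<subseteq> S" "pathfinish \<gamma> = pathstart \<gamma>"
  shows "circ_lambda c \<gamma> \<in> \<int>"
proof -
  obtain g where g: "continuous_on {0..1} g" "\<And>t. t \<in> {0..1} \<Longrightarrow> c (g t) = \<gamma> t"
    using cp_path_lift[OF cp assms(2,3)] by blast
  have "c (g 1) = c (g 0)" using g(2)[of 0] g(2)[of 1] assms(4) by (simp add: pathstart_def pathfinish_def)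
  then obtain n :: int where "g 1 = g 0 + of_int n" using cp_eq_iff[OF cp] by blast
  then show ?thesis using cp_lambda[OF cp g] by simp
qed

theorem lemma7:
  fixes M N S1 S2 :: "'a::t2_space set"
    and c1 c2 :: "real \<Rightarrow> 'a" and p1 p2 :: 'a
    and f :: "'a \<Rightarrow> 'a" and H :: "'a \<times> real \<Rightarrow> 'a"
    and F :: "real \<Rightarrow> 'a \<Rightarrow> 'a" and l :: int
  assumes "CARD('n::finite) \<ge> 2"
    and "top_manifold M TYPE('n)"
    and "circle_param c1 S1" and "circle_param c2 S2"
    and "S1 \<inter> S2 = {}"
    and "S1 \<union> S2 \<subseteq> manifold_interior M TYPE('n)"
    and "p1 \<in> S1" and "p2 \<in> S2"
    and "S1 \<union> S2 \<subseteq> N" and "N \<subseteq> M"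
    and inj: "\<And>\<gamma>1 \<gamma>2. path \<gamma>1 \<Longrightarrow> path_image \<gamma>1 \<subseteq> S1 \<Longrightarrow> pathstart \<gamma>1 = p1 \<Longrightarrow> pathfinish \<gamma>1 = p1 \<Longrightarrow>
                path \<gamma>2 \<Longrightarrow> path_image \<gamma>2 \<subseteq> S1 \<Longrightarrow> pathstart \<gamma>2 = p1 \<Longrightarrow> pathfinish \<gamma>2 = p1 \<Longrightarrow>
                homotopic_paths N \<gamma>1 \<gamma>2 \<Longrightarrow> homotopic_paths S1 \<gamma>1 \<gamma>2"
    and "continuous_on S1 f" and "f ` S1 \<subseteq> S2" and "f p1 = p2"
    and "circ_lambda c2 (f \<circ> c1) = of_int l"
    and "continuous_on (S1 \<times> {0..1}) H" and "H ` (S1 \<times> {0..1}) \<subseteq> N"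
    and "\<And>x. x \<in> S1 \<Longrightarrow> H (x, 0) = x" and "\<And>x. x \<in> S1 \<Longrightarrow> H (x, 1) = f x"
    and "isot_id_id M (S1 \<union> S2) F"
    and "\<And>s t. s \<in> {0..1} \<Longrightarrow> t \<in> {0..1} \<Longrightarrow> F t (H (p1, s)) \<in> N"
  shows "circ_lambda c2 (\<lambda>t. F t p2) = of_int l * circ_lambda c1 (\<lambda>t. F t p1)"
proof -
  note cp1 = assms(3) and cp2 = assms(4) and disj = assms(5) and p1 = assms(7) and p2 = assms(8)
    and SN = assms(9) and NM = assms(10) and fc = assms(12) and fS = assms(13) and fp = assms(14)
    and fl = assms(15) and Hc = assms(16) and HN = assms(17) and H0 = assms(18) and H1 = assms(19)
    and iso = assms(20) and FN = assms(21)
  have SM: "S1 \<union> S2 \<subseteq> M" using assms(6) by (auto simp: manifold_interior_def)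
  obtain G where hom: "homeomorphism (M \<times> {0..1}) (M \<times> {0..1}) (\<lambda>(x,t). (F t x, t)) G"
    using iso unfolding isot_id_id_def by blast
  have FL: "\<And>t. t \<in> {0..1} \<Longrightarrow> F t ` (S1 \<union> S2) = S1 \<union> S2"
    and F01: "\<And>x. x \<in> M \<Longrightarrow> F 0 x = x \<and> F 1 x = x"
    using iso unfolding isot_id_id_def by auto
  have Fc: "continuous_on (M \<times> {0..1}) (\<lambda>z. F (snd z) (fst z))"
    using continuous_on_fst[OF homeomorphism_cont1[OF hom]] by (simp add: case_prod_beta)
  have Fpath: "continuous_on {0..1} (\<lambda>t. F t p)" if "p \<in> M" for p
    by (rule continuous_on_compose2[OF Fc, of _ "\<lambda>t. (p, t)", simplified]) (use that in \<open>auto intro!: continuous_intros\<close>)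
  have cl1: "closed S1" and cl2: "closed S2"
    using cp_compact[OF cp1] cp_compact[OF cp2] by (auto intro: compact_imp_closed)
  have stay1: "F t p \<in> S1" if "p \<in> S1" "t \<in> {0..1}" for p t
  proof -
    have pM: "p \<in> M" using that SM by auto
    have "(\<lambda>t. F t p) ` {0..1} \<subseteq> S1"
    proof (rule connected_stay[OF _ _ cl1 cl2 disj])
      show "connected ((\<lambda>t. F t p) ` {0..1})" by (rule connected_continuous_image[OF Fpath[OF pM]]) simp
      show "(\<lambda>t. F t p) ` {0..1} \<subseteq> S1 \<union> S2" using FL that(1) by blast
      show "p \<in> (\<lambda>t. F t p) ` {0..1}" using F01[OF pM] by (metis atLeastAtMost_iff image_eqI order_refl zero_le_one)
    qed (use that in auto)
    then show ?thesis using that by blast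
  qed
  have stay2: "F t p \<in> S2" if "p \<in> S2" "t \<in> {0..1}" for p t
  proof -
    have pM: "p \<in> M" using that SM by auto
    have "(\<lambda>t. F t p) ` {0..1} \<subseteq> S2"
    proof (rule connected_stay[OF _ _ cl2 cl1])
      show "connected ((\<lambda>t. F t p) ` {0..1})" by (rule connected_continuous_image[OF Fpath[OF pM]]) simp
      show "(\<lambda>t. F t p) ` {0..1} \<subseteq> S2 \<union> S1" using FL that(1) by blast
      show "p \<in> (\<lambda>t. F t p) ` {0..1}" using F01[OF pM] by (metis atLeastAtMost_iff image_eqI order_refl zero_le_one)
    qed (use that disj in auto)
    then show ?thesis using that by blast
  qed
  define \<alpha> where "\<alpha> s = H (p1, s)" for s
  have \<alpha>c: "continuous_on {0..1} \<alpha>"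
    unfolding \<alpha>_def by (rule continuous_on_compose2[OF Hc, of _ "\<lambda>s. (p1, s)", simplified]) (use p1 in \<open>auto intro!: continuous_intros\<close>)
  have \<alpha>N: "\<alpha> s \<in> N" if "s \<in> {0..1}" for s using HN p1 that by (auto simp: \<alpha>_def)
  have \<alpha>0: "\<alpha> 0 = p1" using H0[OF p1] by (simp add: \<alpha>_def)
  have \<alpha>1: "\<alpha> 1 = p2" using H1[OF p1] fp by (simp add: \<alpha>_def)
  have p\<alpha>: "path \<alpha>" and pi\<alpha>: "path_image \<alpha> \<subseteq> N" using \<alpha>c \<alpha>N by (auto simp: path_def path_image_def)
  define Sq :: "(real \<times> real) set" where "Sq = {0..1} \<times> {0..1}"
  define h where "h z = F (snd z) (\<alpha> (fst z))" for z :: "real \<times> real"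
  have hc: "continuous_on Sq h"
    unfolding h_def Sq_def
    by (rule continuous_on_compose2[OF Fc, of _ "\<lambda>z. (\<alpha> (fst z), snd z)", simplified])
       (use \<alpha>N NM in \<open>auto intro!: continuous_intros continuous_on_compose2[OF \<alpha>c]\<close>)
  have hN: "h z \<in> N" if "z \<in> Sq" for z using that FN by (auto simp: h_def Sq_def \<alpha>_def)
  have h01: "h (s, 0) = \<alpha> s" "h (s, 1) = \<alpha> s" if "s \<in> {0..1}" for s
    using F01 \<alpha>N[OF that] NM by (auto simp: h_def)
  define q where "q z = (fst z, ee (snd z))" for z :: "real \<times> real"
  define h' where "h' y = h (SOME w. w \<in> Sq \<and> q w = y)" for y
  have qeq: "h w = h w'" if "w \<in> Sq" "w' \<in> Sq" "q w = q w'" for w w'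
  proof -
    obtain s t s' t' where w: "w = (s, t)" "w' = (s', t')" by fastforce
    have s: "s' = s" "s \<in> {0..1}" and t: "t \<in> {0..1}" "t' \<in> {0..1}" and e: "ee t = ee t'"
      using that by (auto simp: w q_def Sq_def)
    obtain n :: int where n: "t = t' + of_int n" using e ee_eq_iff by blast
    have "n = 0 \<or> (n = 1 \<and> t = 1 \<and> t' = 0) \<or> (n = -1 \<and> t = 0 \<and> t' = 1)"
    proof -
      have "of_int n \<le> (1::real)" "-1 \<le> (of_int n :: real)" using n t by auto
      then have "n \<le> 1" "-1 \<le> n" by linarith+
      then have "n = 0 \<or> n = 1 \<or> n = -1" by linarith
      then show ?thesis using n t by auto
    qed
    then show ?thesis using h01[OF s(2)] by (auto simp: w s n)
  qed
  have h'q: "h' (q w) = h w" if "w \<in> Sq" for w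
  proof -
    have ex: "\<exists>w'. w' \<in> Sq \<and> q w' = q w" using that by blast
    have "(SOME w'. w' \<in> Sq \<and> q w' = q w) \<in> Sq \<and> q (SOME w'. w' \<in> Sq \<and> q w' = q w) = q w"
      by (rule someI_ex[OF ex])
    then show ?thesis unfolding h'_def using qeq that by blast
  qed
  have h'c: "continuous_on (q ` Sq) h'"
  proof (rule factor_cont[where X=Sq and q=q and h=h, OF _ _ hc h'q])
    show "compact Sq" unfolding Sq_def by (intro compact_Times compact_Icc)
    show "continuous_on Sq q" unfolding q_def by (auto intro!: continuous_intros continuous_on_compose2[OF continuous_ee])
  qed
  have inq: "(s, ee \<tau>) \<in> q ` Sq" if "s \<in> {0..1}" for s \<tau>
  proof
    show "(s, ee \<tau>) = q (s, frac \<tau>)" by (simp add: q_def ee_frac)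
    show "(s, frac \<tau>) \<in> Sq" using that by (simp add: Sq_def frac_lt_1 less_imp_le)
  qed
  have h'v: "h' (s, ee \<tau>) = F (frac \<tau>) (\<alpha> s)" if "s \<in> {0..1}" for s \<tau>
  proof -
    have "h' (s, ee \<tau>) = h' (q (s, frac \<tau>))" by (simp add: q_def ee_frac)
    also have "\<dots> = h (s, frac \<tau>)" by (rule h'q) (use that in \<open>simp add: Sq_def frac_lt_1 less_imp_le\<close>)
    finally show ?thesis by (simp add: h_def)
  qed
  have h'v01: "h' (s, ee t) = F t (\<alpha> s)" if "s \<in> {0..1}" "t \<in> {0..1}" for s t
    using h'q[of "(s,t)"] that by (simp add: q_def Sq_def h_def)
  have h'int: "h' (s, ee (of_int k)) = \<alpha> s" if "s \<in> {0..1}" for s k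
    using h'v[OF that, of "of_int k"] F01 \<alpha>N[OF that] NM by auto
  have \<sigma>c: "continuous_on UNIV (\<lambda>t. h' (s, ee t))" if "s \<in> {0..1}" for s
    by (rule continuous_on_compose2[OF h'c, of _ "\<lambda>t. (s, ee t)"])
       (use that inq in \<open>auto intro!: continuous_intros continuous_on_compose2[OF continuous_ee]\<close>)
  have \<sigma>per: "h' (s, ee (t + 1)) = h' (s, ee t)" for s t
  proof -
    have "ee (t + 1) = ee t" by (simp add: ee_eq_iff)
    then show ?thesis by simp
  qed
  have \<sigma>1S: "range (\<lambda>t. h' (0, ee t)) \<subseteq> S1"
    using h'v[of 0] stay1[OF p1] \<alpha>0 by (auto simp: frac_lt_1 less_imp_le)
  have \<sigma>2S: "range (\<lambda>t. h' (1, ee t)) \<subseteq> S2"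
    using h'v[of 1] stay2[OF p2] \<alpha>1 by (auto simp: frac_lt_1 less_imp_le)
  define \<Gamma>1 where "\<Gamma>1 t = h' (0, ee (of_int l * t))" for t
  define \<Gamma>2 where "\<Gamma>2 t = h' (1, ee (of_int l * t))" for t
  have E\<Gamma>1: "\<Gamma>1 = (\<lambda>t. h' (0, ee (of_int l * t)))" by (simp add: fun_eq_iff \<Gamma>1_def)
  have E\<Gamma>2: "\<Gamma>2 = (\<lambda>t. h' (1, ee (of_int l * t)))" by (simp add: fun_eq_iff \<Gamma>2_def)
  define \<nu>1 where "\<nu>1 = circ_lambda c1 (\<lambda>t. F t p1)"
  define \<nu>2 where "\<nu>2 = circ_lambda c2 (\<lambda>t. F t p2)"
  have l\<sigma>1: "circ_lambda c1 (\<lambda>t. h' (0, ee t)) = \<nu>1"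
    unfolding \<nu>1_def by (rule circ_lambda_cong) (simp add: h'v01 \<alpha>0)
  have l\<sigma>2: "circ_lambda c2 (\<lambda>t. h' (1, ee t)) = \<nu>2"
    unfolding \<nu>2_def by (rule circ_lambda_cong) (simp add: h'v01 \<alpha>1)
  have l\<Gamma>1: "circ_lambda c1 \<Gamma>1 = of_int l * \<nu>1"
  proof -
    have "circ_lambda c1 (\<lambda>t. h' (0, ee (0 + of_int l * t))) = of_int l * circ_lambda c1 (\<lambda>t. h' (0, ee t))"
      by (rule cp_lambda_periodic[OF cp1 \<sigma>c \<sigma>1S \<sigma>per]) simp
    then show ?thesis by (simp add: E\<Gamma>1 l\<sigma>1)
  qed
  have l\<Gamma>2: "circ_lambda c2 \<Gamma>2 = of_int l * \<nu>2"
  proof -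
    have "circ_lambda c2 (\<lambda>t. h' (1, ee (0 + of_int l * t))) = of_int l * circ_lambda c2 (\<lambda>t. h' (1, ee t))"
      by (rule cp_lambda_periodic[OF cp2 \<sigma>c \<sigma>2S \<sigma>per]) simp
    then show ?thesis by (simp add: E\<Gamma>2 l\<sigma>2)
  qed
  have \<Gamma>c: "continuous_on {0..1} (\<lambda>t. h' (s, ee (of_int l * t)))" if "s \<in> {0..1}" for s
    by (rule continuous_on_compose2[OF \<sigma>c[OF that], of _ "\<lambda>t. of_int l * t"]) (auto intro!: continuous_intros)
  have p\<Gamma>1: "path \<Gamma>1" and p\<Gamma>2: "path \<Gamma>2"
    unfolding path_def \<Gamma>1_def \<Gamma>2_def by (auto intro: \<Gamma>c)
  have i\<Gamma>1: "path_image \<Gamma>1 \<subseteq> S1" using \<sigma>1S by (auto simp: path_image_def \<Gamma>1_def)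
  have i\<Gamma>2: "path_image \<Gamma>2 \<subseteq> S2" using \<sigma>2S by (auto simp: path_image_def \<Gamma>2_def)
  have se\<Gamma>1: "pathstart \<Gamma>1 = p1" "pathfinish \<Gamma>1 = p1"
    using h'int[of 0 0] h'int[of 0 l] \<alpha>0 by (auto simp: pathstart_def pathfinish_def \<Gamma>1_def)
  have se\<Gamma>2: "pathstart \<Gamma>2 = p2" "pathfinish \<Gamma>2 = p2"
    using h'int[of 1 0] h'int[of 1 l] \<alpha>1 by (auto simp: pathstart_def pathfinish_def \<Gamma>2_def)
  have \<nu>2int: "\<nu>2 \<in> \<int>"
  proof -
    have "circ_lambda c2 (\<lambda>t. h' (1, ee t)) \<in> \<int>"
    proof (rule cp_lambda_loop_int[OF cp2])
      show "path (\<lambda>t. h' (1, ee t))" unfolding path_def using \<sigma>c[of 1] by (auto intro: continuous_on_subset)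
      show "path_image (\<lambda>t. h' (1, ee t)) \<subseteq> S2" using \<sigma>2S by (auto simp: path_image_def)
      show "pathfinish (\<lambda>t. h' (1, ee t)) = pathstart (\<lambda>t. h' (1, ee t))"
        using \<sigma>per[of 1 0] by (simp add: pathstart_def pathfinish_def)
    qed
    then show ?thesis using l\<sigma>2 by simp
  qed
  then obtain n2 :: int where n2: "\<nu>2 = of_int n2" by (auto elim: Ints_cases)
  have "p1 \<in> range c1" using p1 cp_image[OF cp1] by simp
  then obtain a where a: "c1 a = p1" by blast
  define Q where "Q t = c1 (a + of_int n2 * t)" for t
  have EQ: "Q = (\<lambda>t. c1 (a + of_int n2 * t))" by (simp add: fun_eq_iff Q_def)
  have Qc: "continuous_on UNIV Q" unfolding Q_def
    by (rule continuous_on_compose2[OF cp_cont[OF cp1]]) (auto intro!: continuous_intros)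
  have QS: "Q t \<in> S1" for t by (simp add: Q_def cp_in[OF cp1])
  have pQ: "path Q" unfolding path_def using Qc by (auto intro: continuous_on_subset)
  have iQ: "path_image Q \<subseteq> S1" using QS by (auto simp: path_image_def)
  have seQ: "pathstart Q = p1" "pathfinish Q = p1"
    using a cp_int[OF cp1, of a n2] by (auto simp: pathstart_def pathfinish_def Q_def)
  have lc1: "circ_lambda c1 c1 = 1"
    using cp_lambda[OF cp1, of "\<lambda>t. t" c1] by simp
  have lQ: "circ_lambda c1 Q = of_int n2"
  proof -
    have "circ_lambda c1 (\<lambda>t. c1 (a + of_int n2 * t)) = of_int n2 * circ_lambda c1 c1"
      by (rule cp_lambda_periodic[OF cp1]) (auto simp: cp_cont[OF cp1] cp_in[OF cp1] cp_int[OF cp1, of _ 1, simplified])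
    then show ?thesis by (simp add: EQ lc1)
  qed
  define fQ where "fQ t = f (Q t)" for t
  have EfQ: "fQ = (\<lambda>t. f (c1 (a + of_int n2 * t)))" by (simp add: fun_eq_iff fQ_def Q_def)
  have fc1c: "continuous_on UNIV (\<lambda>t. f (c1 t))"
    by (rule continuous_on_compose2[OF fc cp_cont[OF cp1]]) (auto simp: cp_in[OF cp1])
  have fQc: "continuous_on UNIV fQ" unfolding fQ_def
    by (rule continuous_on_compose2[OF fc Qc]) (auto simp: QS)
  have fQS: "fQ t \<in> S2" for t using fS QS by (auto simp: fQ_def)
  have pfQ: "path fQ" unfolding path_def using fQc by (auto intro: continuous_on_subset)
  have ifQ: "path_image fQ \<subseteq> S2" using fQS by (auto simp: path_image_def)
  have sefQ: "pathstart fQ = p2" "pathfinish fQ = p2" using seQ fp by (auto simp: pathstart_def pathfinish_def fQ_def)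
  have lfQ: "circ_lambda c2 fQ = of_int n2 * of_int l"
  proof -
    have "circ_lambda c2 (\<lambda>t. f (c1 (a + of_int n2 * t))) = of_int n2 * circ_lambda c2 (\<lambda>t. f (c1 t))"
    proof (rule cp_lambda_periodic[OF cp2 fc1c])
      show "range (\<lambda>t. f (c1 t)) \<subseteq> S2" using fS by (auto simp: cp_in[OF cp1])
      show "f (c1 (t + 1)) = f (c1 t)" for t using cp_int[OF cp1, of t 1] by simp
    qed
    moreover have "(\<lambda>t. f (c1 t)) = f \<circ> c1" by (simp add: comp_def)
    ultimately show ?thesis using fl by (simp add: EfQ)
  qed
  define K1 where "K1 z = h' (fst z, ee (of_int l * snd z))" for z :: "real \<times> real"
  have K1c: "continuous_on ({0..1} \<times> {0..1}) K1"
    unfolding K1_def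
    by (rule continuous_on_compose2[OF h'c, of _ "\<lambda>z. (fst z, ee (of_int l * snd z))"])
       (use inq in \<open>auto intro!: continuous_intros continuous_on_compose2[OF continuous_ee]\<close>)
  have K1N: "K1 ` ({0..1} \<times> {0..1}) \<subseteq> N"
  proof clarsimp
    fix s t :: real assume st: "0 \<le> s" "s \<le> 1" "0 \<le> t" "t \<le> 1"
    have "K1 (s, t) = h (s, frac (of_int l * t))" using h'v st by (simp add: h_def K1_def)
    then show "K1 (s, t) \<in> N" using hN st by (simp add: Sq_def frac_lt_1 less_imp_le)
  qed
  have K1u: "\<And>t. t \<in> {0..1} \<Longrightarrow> \<Gamma>1 t = K1 (0, t)" by (simp add: \<Gamma>1_def K1_def)
  have K1v: "\<And>t. t \<in> {0..1} \<Longrightarrow> \<Gamma>2 t = K1 (1, t)" by (simp add: \<Gamma>2_def K1_def)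
  have K1a: "\<And>s. s \<in> {0..1} \<Longrightarrow> \<alpha> s = K1 (s, 0)" using h'int[of _ 0] by (simp add: K1_def)
  have K1b: "\<And>s. s \<in> {0..1} \<Longrightarrow> \<alpha> s = K1 (s, 1)" using h'int[of _ l] by (simp add: K1_def)
  have hom1: "homotopic_paths N \<Gamma>1 (\<alpha> +++ \<Gamma>2 +++ reversepath \<alpha>)"
    by (rule square_homotopy[OF K1c K1N K1u K1v K1a K1b])
  define K2 where "K2 z = H (Q (snd z), fst z)" for z :: "real \<times> real"
  have K2c: "continuous_on ({0..1} \<times> {0..1}) K2"
    unfolding K2_def
    by (rule continuous_on_compose2[OF Hc, of _ "\<lambda>z. (Q (snd z), fst z)"])
       (use QS in \<open>auto intro!: continuous_intros continuous_on_compose2[OF Qc]\<close>)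
  have K2N: "K2 ` ({0..1} \<times> {0..1}) \<subseteq> N"
    using HN QS by (fastforce simp: K2_def)
  have K2u: "\<And>t. t \<in> {0..1} \<Longrightarrow> Q t = K2 (0, t)" using H0[OF QS] by (simp add: K2_def)
  have K2v: "\<And>t. t \<in> {0..1} \<Longrightarrow> fQ t = K2 (1, t)" using H1[OF QS] by (simp add: K2_def fQ_def)
  have K2a: "\<And>s. s \<in> {0..1} \<Longrightarrow> \<alpha> s = K2 (s, 0)" using seQ by (simp add: K2_def \<alpha>_def pathstart_def)
  have K2b: "\<And>s. s \<in> {0..1} \<Longrightarrow> \<alpha> s = K2 (s, 1)" using seQ by (simp add: K2_def \<alpha>_def pathfinish_def)
  have hom2: "homotopic_paths N Q (\<alpha> +++ fQ +++ reversepath \<alpha>)"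
    by (rule square_homotopy[OF K2c K2N K2u K2v K2a K2b])
  have hom3: "homotopic_paths S2 \<Gamma>2 fQ"
    by (rule cp_homotopic_if_lambda[OF cp2 p\<Gamma>2 pfQ i\<Gamma>2 ifQ]) (simp_all add: se\<Gamma>2 sefQ l\<Gamma>2 lfQ n2)
  have hom3N: "homotopic_paths N \<Gamma>2 fQ" using homotopic_paths_subset[OF hom3] SN by blast
  have hom4: "homotopic_paths N (\<alpha> +++ \<Gamma>2 +++ reversepath \<alpha>) (\<alpha> +++ fQ +++ reversepath \<alpha>)"
  proof (rule homotopic_paths_join)
    show "homotopic_paths N \<alpha> \<alpha>" using p\<alpha> pi\<alpha> by simp
    show "homotopic_paths N (\<Gamma>2 +++ reversepath \<alpha>) (fQ +++ reversepath \<alpha>)"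
    proof (rule homotopic_paths_join[OF hom3N])
      show "homotopic_paths N (reversepath \<alpha>) (reversepath \<alpha>)" using p\<alpha> pi\<alpha> by simp
      show "pathfinish \<Gamma>2 = pathstart (reversepath \<alpha>)" by (simp add: se\<Gamma>2 pathfinish_def[of \<alpha>] \<alpha>1)
    qed
    show "pathfinish \<alpha> = pathstart (\<Gamma>2 +++ reversepath \<alpha>)" using se\<Gamma>2 \<alpha>1 by (simp add: pathfinish_def)
  qed
  have "homotopic_paths N \<Gamma>1 Q"
    using hom1 hom4 homotopic_paths_sym[OF hom2] homotopic_paths_trans by metis
  then have "homotopic_paths S1 \<Gamma>1 Q"
    by (rule inj[OF p\<Gamma>1 i\<Gamma>1 se\<Gamma>1 pQ iQ seQ])
  then have "circ_lambda c1 \<Gamma>1 = circ_lambda c1 Q" by (rule cp_lambda_homotopic[OF cp1])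
  then have "of_int l * \<nu>1 = \<nu>2" using l\<Gamma>1 lQ n2 by simp
  then show ?thesis by (simp add: \<nu>1_def \<nu>2_def)
qed


end
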